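(* For every integer $k\ge 1$, the triangulane $T_k$ satisfies $$SO(T_k)=\big(36(2^{k-1}-1)+6\cdot 2^{k-1}+12\big)\sqrt{2}+6\cdot 2^k\sqrt{5}.$$
   Context: For a finite simple graph $G$, $SO(G)=\sum_{uv\in E(G)}\sqrt{d_u^2+d_v^2}$, where $d_u$ is the degree of $u$ in $G$ (the Sombor index). The circuit of pairwise disjoint graphs $H_1,H_2,H_3$ with respect to vertices $z_i\in V(H_i)$ is obtained from their disjoint union and a triangle $C_3$ with vertices $c_1,c_2,c_3$ by identifying $z_i$ with $c_i$ for each $i$. Define rooted graphs $G_k$ recursively: $G_1$ is a triangle with a distinguished vertex $y_1$; for $k\ge 2$, $G_k$ is the circuit of two disjoint copies of $G_{k-1}$ (with respect to their vertices $y_{k-1}$) and $K_1$ (with respect to its single vertex), and $y_k$ is the vertex where $K_1$ was placed. The triangulane $T_k$ is the circuit of three disjoint copies of $G_k$ with respect to their vertices $y_k$. *)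

theory Defs
  imports Complex_Main
begin

text \<open>Finite simple graphs with vertices addressed by lists of naturals;
  an edge is a two-element set of vertices.\<close>

type_synonym vert = "nat list"
type_synonym graph = "vert set \<times> vert set set"

definition verts :: "graph \<Rightarrow> vert set" where "verts G = fst G"
definition edges :: "graph \<Rightarrow> vert set set" where "edges G = snd G"

definition degree :: "graph \<Rightarrow> vert \<Rightarrow> nat" where
  "degree G v = card {e \<in> edges G. v \<in> e}"

text \<open>Sombor index: sum over edges uv of sqrt(d_u^2 + d_v^2); for an edge e = {u,v}
  (u \<noteq> v) the radicand is the sum of the squared degrees of the two endpoints.\<close>
definition sombor :: "graph \<Rightarrow> real" where
  "sombor G = (\<Sum>e\<in>edges G. sqrt (\<Sum>v\<in>e. (real (degree G v))^2))"

text \<open>Circuit of H1,H2,H3 w.r.t. z1,z2,z3: disjoint union (copy i is tagged by prefixing i)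
  plus a triangle on the three (tagged) root vertices.\<close>
definition circuit :: "graph \<Rightarrow> vert \<Rightarrow> graph \<Rightarrow> vert \<Rightarrow> graph \<Rightarrow> vert \<Rightarrow> graph" where
  "circuit H1 z1 H2 z2 H3 z3 =
    ((Cons 0 ` verts H1) \<union> (Cons 1 ` verts H2) \<union> (Cons 2 ` verts H3),
     ((`) (Cons 0) ` edges H1) \<union> ((`) (Cons 1) ` edges H2) \<union> ((`) (Cons 2) ` edges H3)
       \<union> {{0 # z1, 1 # z2}, {1 # z2, 2 # z3}, {0 # z1, 2 # z3}})"

definition K1 :: graph where "K1 = ({[]}, {})"

definition triangle :: graph where
  "triangle = ({[0], [1], [2]}, {{[0],[1]}, {[1],[2]}, {[0],[2]}})"

text \<open>Rooted graphs (G_k, y_k) for k \<ge> 1 (index 0 is an unused dummy).\<close>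
fun Gk :: "nat \<Rightarrow> graph" where
  "Gk 0 = ({}, {})"
| "Gk (Suc 0) = triangle"
| "Gk (Suc (Suc n)) = circuit (Gk (Suc n)) (if n = 0 then [0] else [2])
                              (Gk (Suc n)) (if n = 0 then [0] else [2]) K1 []"

fun yk :: "nat \<Rightarrow> vert" where
  "yk 0 = []"
| "yk (Suc 0) = [0]"
| "yk (Suc (Suc n)) = [2]"

lemma yk_Suc: "yk (Suc n) = (if n = 0 then [0] else [2])"
  by (cases n) auto

definition triangulane :: "nat \<Rightarrow> graph" where
  "triangulane k = circuit (Gk k) (yk k) (Gk k) (yk k) (Gk k) (yk k)"

end

theory Submission
  imports Defs
begin

definition sw :: "vert set set \<Rightarrow> (vert \<Rightarrow> real) \<Rightarrow> real" where
  "sw E d = (\<Sum>e\<in>E. sqrt (\<Sum>v\<in>e. (d v)^2))"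

lemma sum_img_cons: "(\<Sum>v\<in>Cons i ` e. f v) = (\<Sum>v\<in>e. f (i # v))"
  by (subst sum.reindex) (auto simp: inj_on_def)

lemma img_cons_eq: "Cons i ` e = Cons j ` e' \<Longrightarrow> e \<noteq> {} \<Longrightarrow> i = j"
proof -
  assume h: "Cons i ` e = Cons j ` e'" and "e \<noteq> {}"
  then obtain x where "x \<in> e" by auto
  then have "i # x \<in> Cons j ` e'" using h by blast
  then show "i = j" by auto
qed

lemma sw_img: "sw ((`) (Cons i) ` E) d = sw E (\<lambda>v. d (i # v))"
proof -
  have "inj_on ((`) (Cons i)) E" by (auto simp: inj_on_def inj_image_eq_iff)
  then show ?thesis unfolding sw_def by (simp add: sum.reindex sum_img_cons)
qed

lemma not_img: "a \<in> x \<Longrightarrow> b \<in> x \<Longrightarrow> hd a \<noteq> hd b \<Longrightarrow> x \<notin> (`) (Cons i) ` E"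
  by auto

lemma T_disj: "({{0 # z1, 1 # z2}, {1 # z2, 2 # z3}, {0 # z1, 2 # z3}} :: vert set set) \<inter>
  ((`) (Cons 0) ` E1 \<union> (`) (Cons 1) ` E2 \<union> (`) (Cons 2) ` E3) = {}"
proof -
  have t1: "{0#z1,1#z2} \<notin> (`) (Cons i) ` E" for i E using not_img[of "0#z1" "{0#z1,1#z2}" "1#z2"] by simp
  have t2: "{1#z2,2#z3} \<notin> (`) (Cons i) ` E" for i E using not_img[of "1#z2" "{1#z2,2#z3}" "2#z3"] by simp
  have t3: "{0#z1,2#z3} \<notin> (`) (Cons i) ` E" for i E using not_img[of "0#z1" "{0#z1,2#z3}" "2#z3"] by simp
  show ?thesis using t1 t2 t3 by simp
qed

lemma sw_circuit:
  assumes f: "finite (edges H1)" "finite (edges H2)" "finite (edges H3)"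
    and ne: "{} \<notin> edges H1" "{} \<notin> edges H2" "{} \<notin> edges H3"
  shows "sw (edges (circuit H1 z1 H2 z2 H3 z3)) d =
    sw (edges H1) (\<lambda>v. d (0 # v)) + sw (edges H2) (\<lambda>v. d (1 # v)) + sw (edges H3) (\<lambda>v. d (2 # v))
    + sqrt ((d (0#z1))^2 + (d (1#z2))^2) + sqrt ((d (1#z2))^2 + (d (2#z3))^2)
    + sqrt ((d (0#z1))^2 + (d (2#z3))^2)"
proof -
  let ?A0 = "(`) (Cons 0) ` edges H1"
  let ?A1 = "(`) (Cons 1) ` edges H2"
  let ?A2 = "(`) (Cons 2) ` edges H3"
  let ?T = "{{0 # z1, 1 # z2}, {1 # z2, 2 # z3}, {0 # z1, 2 # z3}} :: vert set set"
  have E: "edges (circuit H1 z1 H2 z2 H3 z3) = ?A0 \<union> ?A1 \<union> ?A2 \<union> ?T"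
    by (simp add: circuit_def edges_def)
  have d01: "?A0 \<inter> ?A1 = {}" using ne by (auto dest: img_cons_eq)
  have d012: "(?A0 \<union> ?A1) \<inter> ?A2 = {}" using ne by (auto dest: img_cons_eq)
  have dT: "(?A0 \<union> ?A1 \<union> ?A2) \<inter> ?T = {}"
    using T_disj[of z1 z2 z3 "edges H1" "edges H2" "edges H3"] by (simp add: Int_commute)
  have "sw (?A0 \<union> ?A1 \<union> ?A2 \<union> ?T) d = sw ?A0 d + sw ?A1 d + sw ?A2 d + sw ?T d"
    unfolding sw_def
    apply (subst sum.union_disjoint)
       apply (use f in simp)
      apply simp
     apply (rule dT)
    apply (subst sum.union_disjoint)
       apply (use f in simp)
      apply (use f in simp)
     apply (rule d012)
    apply (subst sum.union_disjoint)
       apply (use f in simp)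
      apply (use f in simp)
     apply (rule d01)
    apply simp
    done
  moreover have "sw ?T d = sqrt ((d (0#z1))^2 + (d (1#z2))^2) + sqrt ((d (1#z2))^2 + (d (2#z3))^2)
    + sqrt ((d (0#z1))^2 + (d (2#z3))^2)"
    unfolding sw_def by (simp add: doubleton_eq_iff)
  ultimately show ?thesis using E by (simp add: sw_img)
qed


lemma card_img_deg:
  "card {e \<in> (`) (Cons i) ` E. i # v \<in> e} = card {e \<in> E. v \<in> e}"
proof -
  have "{e \<in> (`) (Cons i) ` E. i # v \<in> e} = (`) (Cons i) ` {e \<in> E. v \<in> e}" by auto
  moreover have "inj_on ((`) (Cons i)) {e \<in> E. v \<in> e}" by (auto simp: inj_on_def inj_image_eq_iff)
  ultimately show ?thesis by (simp add: card_image)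
qed

lemma img_other: "i \<noteq> j \<Longrightarrow> {e \<in> (`) (Cons j) ` E. i # v \<in> e} = {}"
  by auto

lemma coll_un: "{e \<in> A \<union> B. P e} = {e \<in> A. P e} \<union> {e \<in> B. P e}"
  by auto

lemma disj_sub: "A \<inter> B = {} \<Longrightarrow> {e \<in> A. P e} \<inter> {e \<in> B. Q e} = {}"
  by auto

lemma degree_circuit:
  assumes f: "finite (edges H1)" "finite (edges H2)" "finite (edges H3)"
  shows "degree (circuit H1 z1 H2 z2 H3 z3) (0 # v) = degree H1 v + (if v = z1 then 2 else 0)"
    and "degree (circuit H1 z1 H2 z2 H3 z3) (1 # v) = degree H2 v + (if v = z2 then 2 else 0)"
    and "degree (circuit H1 z1 H2 z2 H3 z3) (2 # v) = degree H3 v + (if v = z3 then 2 else 0)"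
proof -
  let ?A0 = "(`) (Cons 0) ` edges H1"
  let ?A1 = "(`) (Cons 1) ` edges H2"
  let ?A2 = "(`) (Cons 2) ` edges H3"
  let ?T = "{{0 # z1, 1 # z2}, {1 # z2, 2 # z3}, {0 # z1, 2 # z3}} :: vert set set"
  let ?C = "circuit H1 z1 H2 z2 H3 z3"
  have E: "edges ?C = ?A0 \<union> ?A1 \<union> ?A2 \<union> ?T"
    by (simp add: circuit_def edges_def)
  have fA: "finite ?A0" "finite ?A1" "finite ?A2" using f by auto
  have dT: "(?A0 \<union> ?A1 \<union> ?A2) \<inter> ?T = {}"
    using T_disj[of z1 z2 z3 "edges H1" "edges H2" "edges H3"] by (simp add: Int_commute)
  have dTs: "?A0 \<inter> ?T = {}" "?A1 \<inter> ?T = {}" "?A2 \<inter> ?T = {}"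
    using dT unfolding Int_Un_distrib2 Un_empty by simp_all
  show "degree ?C (0 # v) = degree H1 v + (if v = z1 then 2 else 0)"
  proof -
    have S: "{e \<in> edges ?C. 0 # v \<in> e} = {e \<in> ?A0. 0 # v \<in> e} \<union> {e \<in> ?T. 0 # v \<in> e}"
      unfolding E coll_un by (simp add: img_other)
    have D: "{e \<in> ?A0. 0 # v \<in> e} \<inter> {e \<in> ?T. 0 # v \<in> e} = {}" by (rule disj_sub[OF dTs(1)])
    have T: "card {e \<in> ?T. 0 # v \<in> e} = (if v = z1 then 2 else 0)"
    proof (cases "v = z1")
      case True
      then have "{e \<in> ?T. 0 # v \<in> e} = {{0 # z1, 1 # z2}, {0 # z1, 2 # z3}}" by auto
      then show ?thesis using True by (simp add: doubleton_eq_iff)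
    next
      case False
      then have "{e \<in> ?T. 0 # v \<in> e} = {}" by auto
      then show ?thesis using False by simp
    qed
    have fX: "finite {e \<in> ?A0. 0 # v \<in> e}" using fA by simp
    have fY: "finite {e \<in> ?T. 0 # v \<in> e}" by simp
    have "degree ?C (0 # v) = card {e \<in> ?A0. 0 # v \<in> e} + card {e \<in> ?T. 0 # v \<in> e}"
      unfolding degree_def S by (rule card_Un_disjoint[OF fX fY D])
    also have "card {e \<in> ?A0. 0 # v \<in> e} = degree H1 v"
      unfolding degree_def by (rule card_img_deg)
    finally show ?thesis using T by simp
  qed
  show "degree ?C (1 # v) = degree H2 v + (if v = z2 then 2 else 0)"
  proof -
    have S: "{e \<in> edges ?C. 1 # v \<in> e} = {e \<in> ?A1. 1 # v \<in> e} \<union> {e \<in> ?T. 1 # v \<in> e}"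
      unfolding E coll_un by (simp add: img_other)
    have D: "{e \<in> ?A1. 1 # v \<in> e} \<inter> {e \<in> ?T. 1 # v \<in> e} = {}" by (rule disj_sub[OF dTs(2)])
    have T: "card {e \<in> ?T. 1 # v \<in> e} = (if v = z2 then 2 else 0)"
    proof (cases "v = z2")
      case True
      then have "{e \<in> ?T. 1 # v \<in> e} = {{0 # z1, 1 # z2}, {1 # z2, 2 # z3}}" by auto
      then show ?thesis using True by (simp add: doubleton_eq_iff)
    next
      case False
      then have "{e \<in> ?T. 1 # v \<in> e} = {}" by auto
      then show ?thesis using False by simp
    qed
    have fX: "finite {e \<in> ?A1. 1 # v \<in> e}" using fA by simp
    have fY: "finite {e \<in> ?T. 1 # v \<in> e}" by simp
    have "degree ?C (1 # v) = card {e \<in> ?A1. 1 # v \<in> e} + card {e \<in> ?T. 1 # v \<in> e}"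
      unfolding degree_def S by (rule card_Un_disjoint[OF fX fY D])
    also have "card {e \<in> ?A1. 1 # v \<in> e} = degree H2 v"
      unfolding degree_def by (rule card_img_deg)
    finally show ?thesis using T by simp
  qed
  show "degree ?C (2 # v) = degree H3 v + (if v = z3 then 2 else 0)"
  proof -
    have S: "{e \<in> edges ?C. 2 # v \<in> e} = {e \<in> ?A2. 2 # v \<in> e} \<union> {e \<in> ?T. 2 # v \<in> e}"
      unfolding E coll_un by (simp add: img_other)
    have D: "{e \<in> ?A2. 2 # v \<in> e} \<inter> {e \<in> ?T. 2 # v \<in> e} = {}" by (rule disj_sub[OF dTs(3)])
    have T: "card {e \<in> ?T. 2 # v \<in> e} = (if v = z3 then 2 else 0)"
    proof (cases "v = z3")
      case True
      then have "{e \<in> ?T. 2 # v \<in> e} = {{1 # z2, 2 # z3}, {0 # z1, 2 # z3}}" by auto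
      then show ?thesis using True by (simp add: doubleton_eq_iff)
    next
      case False
      then have "{e \<in> ?T. 2 # v \<in> e} = {}" by auto
      then show ?thesis using False by simp
    qed
    have fX: "finite {e \<in> ?A2. 2 # v \<in> e}" using fA by simp
    have fY: "finite {e \<in> ?T. 2 # v \<in> e}" by simp
    have "degree ?C (2 # v) = card {e \<in> ?A2. 2 # v \<in> e} + card {e \<in> ?T. 2 # v \<in> e}"
      unfolding degree_def S by (rule card_Un_disjoint[OF fX fY D])
    also have "card {e \<in> ?A2. 2 # v \<in> e} = degree H3 v"
      unfolding degree_def by (rule card_img_deg)
    finally show ?thesis using T by simp
  qed
qed

lemma Gk_Suc: "k \<ge> 1 \<Longrightarrow> Gk (Suc k) = circuit (Gk k) (yk k) (Gk k) (yk k) K1 []"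
  by (cases k) (auto simp: yk_Suc)

lemma yk_Suc2: "k \<ge> 1 \<Longrightarrow> yk (Suc k) = [2]"
  by (cases k) auto

lemma triangle_circ: "triangle = circuit K1 [] K1 [] K1 []"
  by (auto simp: triangle_def circuit_def K1_def verts_def edges_def)

lemma K1_props: "finite (edges K1)" "{} \<notin> edges K1" "degree K1 v = 0" "sw (edges K1) d = 0"
  by (auto simp: K1_def edges_def degree_def sw_def)

lemma circ_fin:
  "finite (edges H1) \<Longrightarrow> finite (edges H2) \<Longrightarrow> finite (edges H3) \<Longrightarrow>
   {} \<notin> edges H1 \<Longrightarrow> {} \<notin> edges H2 \<Longrightarrow> {} \<notin> edges H3 \<Longrightarrow>
   finite (edges (circuit H1 z1 H2 z2 H3 z3)) \<and> {} \<notin> edges (circuit H1 z1 H2 z2 H3 z3)"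
  by (auto simp: circuit_def edges_def)

lemma Gk_fin: "k \<ge> 1 \<Longrightarrow> finite (edges (Gk k)) \<and> {} \<notin> edges (Gk k)"
proof (induction k rule: dec_induct)
  case base
  have "Gk 1 = circuit K1 [] K1 [] K1 []" by (simp add: triangle_circ)
  then show ?case using K1_props circ_fin by metis
next
  case (step k)
  then show ?case using Gk_Suc[OF step(1)] K1_props circ_fin by metis
qed

lemma Gk_deg: "k \<ge> 1 \<Longrightarrow> degree (Gk k) (yk k) = 2"
proof (cases k)
  case 0
  assume "k \<ge> 1" with 0 show ?thesis by simp
next
  case (Suc n)
  assume k: "k \<ge> 1"
  show ?thesis
  proof (cases n)
    case 0
    then show ?thesis using Suc degree_circuit(1)[of K1 K1 K1 "[]" "[]" "[]" "[]"] K1_props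
      by (simp add: triangle_circ)
  next
    case (Suc m)
    then have "yk k = 2 # []" using \<open>k = Suc n\<close> by simp
    moreover have "Gk k = circuit (Gk n) (yk n) (Gk n) (yk n) K1 []"
      using Gk_Suc[of n] \<open>k = Suc n\<close> Suc by simp
    ultimately show ?thesis using degree_circuit(3)[of "Gk n" "Gk n" K1] Gk_fin[of n] Suc K1_props by simp
  qed
qed

definition DD :: "nat \<Rightarrow> real \<Rightarrow> vert \<Rightarrow> real" where
  "DD k \<delta> v = real (degree (Gk k) v) + (if v = yk k then \<delta> else 0)"

definition FF :: "nat \<Rightarrow> real \<Rightarrow> real" where
  "FF k \<delta> = sw (edges (Gk k)) (DD k \<delta>)"

lemma FF1: "FF 1 \<delta> = 2 * sqrt ((2 + \<delta>)^2 + 4) + sqrt 8"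
proof -
  have G: "Gk 1 = circuit K1 [] K1 [] K1 []" by (simp add: triangle_circ)
  have dg: "\<And>i v. i \<in> {0,1,2} \<Longrightarrow> degree (Gk 1) (i # v) = (if v = [] then 2 else 0)"
    unfolding G using degree_circuit[of K1 K1 K1] K1_props by auto
  have "FF 1 \<delta> = sqrt ((DD 1 \<delta> [0])^2 + (DD 1 \<delta> [1])^2) + sqrt ((DD 1 \<delta> [1])^2 + (DD 1 \<delta> [2])^2)
    + sqrt ((DD 1 \<delta> [0])^2 + (DD 1 \<delta> [2])^2)"
    unfolding FF_def G using sw_circuit[of K1 K1 K1 "[]" "[]" "[]" "DD 1 \<delta>"] K1_props
    by (simp add: G)
  moreover have "DD 1 \<delta> [0] = 2 + \<delta>" "DD 1 \<delta> [1] = 2" "DD 1 \<delta> [2] = 2"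
    unfolding DD_def using dg[of 0 "[]"] dg[of 1 "[]"] dg[of 2 "[]"] by auto
  ultimately show ?thesis by (simp add: add.commute)
qed

lemma FF_Suc: assumes "k \<ge> 1"
  shows "FF (Suc k) \<delta> = 2 * FF k 2 + 2 * sqrt (16 + (2 + \<delta>)^2) + sqrt 32"
proof -
  note G = Gk_Suc[OF assms]
  note fin = Gk_fin[OF assms]
  note dc = degree_circuit[of "Gk k" "Gk k" K1 "yk k" "yk k" "[]"]
  have y: "yk (Suc k) = 2 # []" using yk_Suc2[OF assms] by simp
  have e0: "(\<lambda>v. DD (Suc k) \<delta> (0 # v)) = DD k 2"
    unfolding DD_def G y using dc fin K1_props by (intro ext) auto
  have e1: "(\<lambda>v. DD (Suc k) \<delta> (Suc 0 # v)) = DD k 2"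
    unfolding DD_def G y using dc fin K1_props by (intro ext) auto
  have a: "DD (Suc k) \<delta> (0 # yk k) = 4"
    unfolding DD_def G y using dc fin Gk_deg[OF assms] K1_props by auto
  have b: "DD (Suc k) \<delta> (1 # yk k) = 4"
    unfolding DD_def G y using dc fin Gk_deg[OF assms] K1_props by auto
  have c: "DD (Suc k) \<delta> (2 # []) = 2 + \<delta>"
    unfolding DD_def G y using dc fin K1_props by auto
  show ?thesis
    unfolding FF_def
    apply (subst (1) G)
    apply (subst sw_circuit)
    using fin K1_props e0 e1 a b c by (auto simp: FF_def)
qed

lemma FF_closed: "k \<ge> 1 \<Longrightarrow> FF k 2 = 2^(k-1) * (4 * sqrt 5 + 2 * sqrt 2) + 12 * sqrt 2 * (2^(k-1) - 1)"
proof (induction k rule: dec_induct)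
  case base
  have "sqrt 20 = 2 * sqrt 5" using real_sqrt_mult[of 4 5] by simp
  moreover have "sqrt 8 = 2 * sqrt 2" using real_sqrt_mult[of 4 2] by simp
  ultimately show ?case using FF1[of 2] by simp
next
  case (step k)
  have "sqrt 32 = 4 * sqrt 2" using real_sqrt_mult[of 16 2] by simp
  then show ?case using FF_Suc[OF step(1)] step(3) step(1)
    by (cases k) (auto simp: algebra_simps)
qed

theorem mainTheorem11:
  fixes k :: nat
  assumes "k \<ge> 1"
  shows "sombor (triangulane k) =
    (36 * (2 ^ (k - 1) - 1) + 6 * 2 ^ (k - 1) + 12) * sqrt 2 + 6 * 2 ^ k * sqrt 5"
proof -
  note fin = Gk_fin[OF assms]
  note dc = degree_circuit[of "Gk k" "Gk k" "Gk k" "yk k" "yk k" "yk k"]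
  let ?d = "\<lambda>v. real (degree (triangulane k) v)"
  have s: "sombor (triangulane k) = sw (edges (triangulane k)) ?d"
    by (simp add: sombor_def sw_def)
  have e: "(\<lambda>v. ?d (i # v)) = DD k 2" if "i \<in> {0,1,2}" for i
    using that unfolding DD_def triangulane_def using dc fin K1_props by (intro ext) auto
  have f: "?d (i # yk k) = 4" if "i \<in> {0,1,2}" for i
    using that unfolding triangulane_def using dc fin Gk_deg[OF assms] K1_props by auto
  have "sombor (triangulane k) = 3 * FF k 2 + 3 * sqrt 32"
    unfolding s apply (subst (1) triangulane_def)
    apply (subst sw_circuit)
    using fin e[of 0] e[of 1] e[of 2] f[of 0] f[of 1] f[of 2] by (auto simp: FF_def)
  moreover have "sqrt 32 = 4 * sqrt 2" using real_sqrt_mult[of 16 2] by simp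
  moreover have "(2::real) ^ k = 2 * 2 ^ (k - 1)" using assms by (cases k) auto
  ultimately show ?thesis using FF_closed[OF assms] by (simp add: algebra_simps)
qed

end
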